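(* If $G$ and $H$ are infinite, connected, locally finite graphs, then $\beta(G\,\Box\, H)=\infty$.
   Context: The cartesian product $G\Box H$ has vertex set $V(G)\times V(H)$, where $(a,v)$ is adjacent to $(b,w)$ iff either $a=b$ and $vw\in E(H)$, or $v=w$ and $ab\in E(G)$. $d$ denotes shortest-path distance. A vertex $x$ resolves $u,v$ if $d(u,x)\ne d(v,x)$; a set of vertices is a resolving set if every pair of distinct vertices is resolved by some vertex of it. The metric dimension $\beta$ is the minimum cardinality of a resolving set if a finite one exists, and $\infty$ otherwise. *)

theory Defs
  imports Main "HOL-Library.Extended_Nat"
begin

definition graph :: "'a set \<Rightarrow> ('a \<Rightarrow> 'a \<Rightarrow> bool) \<Rightarrow> bool" where
  "graph V E \<longleftrightarrow> (\<forall>u v. E u v \<longrightarrow> u \<in> V \<and> v \<in> V) \<and> (\<forall>u v. E u v \<longrightarrow> E v u) \<and> (\<forall>v. \<not> E v v)"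

definition walk_of_length :: "('a \<Rightarrow> 'a \<Rightarrow> bool) \<Rightarrow> nat \<Rightarrow> 'a \<Rightarrow> 'a \<Rightarrow> bool" where
  "walk_of_length E n u v \<longleftrightarrow>
     (\<exists>xs. length xs = Suc n \<and> xs ! 0 = u \<and> xs ! n = v \<and> (\<forall>i<n. E (xs ! i) (xs ! Suc i)))"

definition dist :: "('a \<Rightarrow> 'a \<Rightarrow> bool) \<Rightarrow> 'a \<Rightarrow> 'a \<Rightarrow> enat" where
  "dist E u v = (if \<exists>n. walk_of_length E n u v then enat (LEAST n. walk_of_length E n u v) else \<infinity>)"

definition connected_graph :: "'a set \<Rightarrow> ('a \<Rightarrow> 'a \<Rightarrow> bool) \<Rightarrow> bool" where
  "connected_graph V E \<longleftrightarrow> (\<forall>u\<in>V. \<forall>v\<in>V. \<exists>n. walk_of_length E n u v)"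

definition locally_finite :: "'a set \<Rightarrow> ('a \<Rightarrow> 'a \<Rightarrow> bool) \<Rightarrow> bool" where
  "locally_finite V E \<longleftrightarrow> (\<forall>v\<in>V. finite {w. E v w})"

definition box_edge :: "'a set \<Rightarrow> ('a \<Rightarrow> 'a \<Rightarrow> bool) \<Rightarrow> 'b set \<Rightarrow> ('b \<Rightarrow> 'b \<Rightarrow> bool)
    \<Rightarrow> 'a \<times> 'b \<Rightarrow> 'a \<times> 'b \<Rightarrow> bool" where
  "box_edge V1 E1 V2 E2 p q \<longleftrightarrow>
     (fst p = fst q \<and> fst p \<in> V1 \<and> E2 (snd p) (snd q)) \<or>
     (snd p = snd q \<and> snd p \<in> V2 \<and> E1 (fst p) (fst q))"

definition resolves :: "('a \<Rightarrow> 'a \<Rightarrow> bool) \<Rightarrow> 'a \<Rightarrow> 'a \<Rightarrow> 'a \<Rightarrow> bool" where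
  "resolves E x u v \<longleftrightarrow> dist E u x \<noteq> dist E v x"

definition resolving_set :: "'a set \<Rightarrow> ('a \<Rightarrow> 'a \<Rightarrow> bool) \<Rightarrow> 'a set \<Rightarrow> bool" where
  "resolving_set V E W \<longleftrightarrow> W \<subseteq> V \<and>
     (\<forall>u\<in>V. \<forall>v\<in>V. u \<noteq> v \<longrightarrow> (\<exists>x\<in>W. resolves E x u v))"

definition metric_dim :: "'a set \<Rightarrow> ('a \<Rightarrow> 'a \<Rightarrow> bool) \<Rightarrow> enat" where
  "metric_dim V E =
     (if \<exists>W. finite W \<and> resolving_set V E W
      then enat (LEAST n. \<exists>W. finite W \<and> resolving_set V E W \<and> card W = n)
      else \<infinity>)"

end

theory Submission
  imports Defs
begin

lemma walk_fun: "walk_of_length E n u v \<longleftrightarrow> (\<exists>f. f 0 = u \<and> f n = v \<and> (\<forall>i<n. E (f i) (f (Suc i))))"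
proof
  assume "walk_of_length E n u v"
  then obtain xs where "length xs = Suc n" "xs ! 0 = u" "xs ! n = v" "\<forall>i<n. E (xs ! i) (xs ! Suc i)"
    unfolding walk_of_length_def by blast
  then show "\<exists>f. f 0 = u \<and> f n = v \<and> (\<forall>i<n. E (f i) (f (Suc i)))" by (intro exI[of _ "(!) xs"]) auto
next
  assume "\<exists>f. f 0 = u \<and> f n = v \<and> (\<forall>i<n. E (f i) (f (Suc i)))"
  then obtain f where f: "f 0 = u" "f n = v" "\<forall>i<n. E (f i) (f (Suc i))" by blast
  have h: "map f [0..<Suc n] ! i = f i" if "i \<le> n" for i
    using that by (metis add_0 diff_zero le_imp_less_Suc nth_map_upt)
  show "walk_of_length E n u v" unfolding walk_of_length_def
    by (intro exI[of _ "map f [0..<Suc n]"]) (use f h in \<open>auto simp del: upt_Suc\<close>)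
qed

lemma walk_0: "walk_of_length E 0 u v \<longleftrightarrow> u = v"
  unfolding walk_fun by auto

lemma walk_edge: "E u v \<Longrightarrow> walk_of_length E 1 u v"
  unfolding walk_fun by (intro exI[of _ "\<lambda>i. if i = 0 then u else v"]) auto

lemma walk_append:
  assumes "walk_of_length E m u v" "walk_of_length E n v w"
  shows "walk_of_length E (m + n) u w"
proof -
  obtain f where f: "f 0 = u" "f m = v" "\<forall>i<m. E (f i) (f (Suc i))" using assms(1) unfolding walk_fun by blast
  obtain g where g: "g 0 = v" "g n = w" "\<forall>i<n. E (g i) (g (Suc i))" using assms(2) unfolding walk_fun by blast
  define h where "h i = (if i \<le> m then f i else g (i - m))" for i
  have "\<forall>i<m+n. E (h i) (h (Suc i))"
  proof (intro allI impI)
    fix i assume i: "i < m + n"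
    show "E (h i) (h (Suc i))"
    proof (cases "i < m")
      case True then show ?thesis using f unfolding h_def by auto
    next
      case False
      then have "Suc i - m = Suc (i - m)" by auto
      then show ?thesis using False g i f(2) unfolding h_def
        by (cases "i = m") auto
    qed
  qed
  moreover have "h 0 = u" "h (m+n) = w" using f g unfolding h_def by auto
  ultimately show ?thesis unfolding walk_fun by blast
qed

lemma walk_rev:
  assumes sym: "\<And>x y. E x y \<Longrightarrow> E y x" and "walk_of_length E n u v"
  shows "walk_of_length E n v u"
proof -
  obtain f where f: "f 0 = u" "f n = v" "\<forall>i<n. E (f i) (f (Suc i))" using assms(2) unfolding walk_fun by blast
  have "\<forall>i<n. E (f (n - i)) (f (n - Suc i))"
  proof (intro allI impI)
    fix i assume "i < n"
    then have "n - i = Suc (n - Suc i)" "n - Suc i < n" by auto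
    then show "E (f (n - i)) (f (n - Suc i))" using f(3) sym by metis
  qed
  then show ?thesis unfolding walk_fun using f by (intro exI[of _ "\<lambda>i. f (n - i)"]) auto
qed

lemma walk_Suc_last:
  assumes "walk_of_length E (Suc n) u v"
  shows "\<exists>w. walk_of_length E n u w \<and> E w v"
proof -
  obtain f where f: "f 0 = u" "f (Suc n) = v" "\<forall>i<Suc n. E (f i) (f (Suc i))" using assms unfolding walk_fun by blast
  have "walk_of_length E n u (f n)" unfolding walk_fun using f by (intro exI[of _ f]) auto
  then show ?thesis using f by auto
qed

lemma walk_Suc_first:
  assumes "walk_of_length E (Suc n) u v"
  shows "\<exists>w. E u w \<and> walk_of_length E n w v"
proof -
  obtain f where f: "f 0 = u" "f (Suc n) = v" "\<forall>i<Suc n. E (f i) (f (Suc i))" using assms unfolding walk_fun by blast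
  have "walk_of_length E n (f 1) v" unfolding walk_fun using f by (intro exI[of _ "\<lambda>i. f (Suc i)"]) auto
  then show ?thesis using f by (intro exI[of _ "f 1"]) auto
qed

lemma walk_split:
  assumes "f 0 = u" "f n = v" "\<forall>i<n. E (f i) (f (Suc i))" "k \<le> n"
  shows "walk_of_length E k u (f k)" "walk_of_length E (n - k) (f k) v"
proof -
  show "walk_of_length E k u (f k)" unfolding walk_fun using assms by (intro exI[of _ f]) auto
  have "\<forall>i<n-k. E (f (k + i)) (f (Suc (k + i)))" using assms by auto
  moreover have "f (k + (n - k)) = v" using assms by simp
  ultimately show "walk_of_length E (n - k) (f k) v" unfolding walk_fun
    by (intro exI[of _ "\<lambda>i. f (k + i)"]) auto
qed

lemma walk_in_V:
  assumes "graph V E" "walk_of_length E n u v" "u \<in> V"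
  shows "v \<in> V"
proof (cases n)
  case 0 then show ?thesis using assms(2,3) by (simp add: walk_0)
next
  case (Suc m)
  then obtain w where "E w v" using walk_Suc_last[of E m u v] assms(2) by auto
  then show ?thesis using assms(1) unfolding graph_def by simp
qed

definition nd :: "('a \<Rightarrow> 'a \<Rightarrow> bool) \<Rightarrow> 'a \<Rightarrow> 'a \<Rightarrow> nat" where
  "nd E u v = (LEAST n. walk_of_length E n u v)"

lemma walk_nd: "walk_of_length E n u v \<Longrightarrow> walk_of_length E (nd E u v) u v"
  unfolding nd_def by (rule LeastI)

lemma nd_le: "walk_of_length E n u v \<Longrightarrow> nd E u v \<le> n"
  unfolding nd_def by (rule Least_le)

lemma dist_nd: "walk_of_length E n u v \<Longrightarrow> dist E u v = enat (nd E u v)"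
  unfolding dist_def nd_def by auto

lemma nd_tri:
  assumes "walk_of_length E m u v" "walk_of_length E n v w"
  shows "nd E u w \<le> nd E u v + nd E v w"
  by (rule nd_le, rule walk_append, rule walk_nd[OF assms(1)], rule walk_nd[OF assms(2)])

lemma nd_sym:
  assumes sym: "\<And>x y. E x y \<Longrightarrow> E y x" and "walk_of_length E n u v"
  shows "nd E u v = nd E v u"
proof -
  have w2: "walk_of_length E n v u" using walk_rev[OF sym assms(2)] by blast
  have "nd E v u \<le> nd E u v" by (rule nd_le[OF walk_rev[OF sym walk_nd[OF assms(2)]]])
  moreover have "nd E u v \<le> nd E v u" by (rule nd_le[OF walk_rev[OF sym walk_nd[OF w2]]])
  ultimately show ?thesis by simp
qed


lemma lift1:
  assumes "walk_of_length E1 n a b" "v \<in> V2"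
  shows "walk_of_length (box_edge V1 E1 V2 E2) n (a, v) (b, v)"
proof -
  obtain f where f: "f 0 = a" "f n = b" "\<forall>i<n. E1 (f i) (f (Suc i))" using assms(1) unfolding walk_fun by blast
  show ?thesis unfolding walk_fun using f assms(2)
    by (intro exI[of _ "\<lambda>i. (f i, v)"]) (auto simp: box_edge_def)
qed

lemma lift2:
  assumes "walk_of_length E2 n v w" "a \<in> V1"
  shows "walk_of_length (box_edge V1 E1 V2 E2) n (a, v) (a, w)"
proof -
  obtain f where f: "f 0 = v" "f n = w" "\<forall>i<n. E2 (f i) (f (Suc i))" using assms(1) unfolding walk_fun by blast
  show ?thesis unfolding walk_fun using f assms(2)
    by (intro exI[of _ "\<lambda>i. (a, f i)"]) (auto simp: box_edge_def)
qed

lemma proj: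
  "walk_of_length (box_edge V1 E1 V2 E2) n p q \<Longrightarrow>
   \<exists>m1 m2. m1 + m2 = n \<and> walk_of_length E1 m1 (fst p) (fst q) \<and> walk_of_length E2 m2 (snd p) (snd q)"
proof (induction n arbitrary: p)
  case 0
  then have "p = q" by (simp add: walk_0)
  then show ?case by (intro exI[of _ 0]) (simp add: walk_0)
next
  case (Suc n)
  obtain w where w: "box_edge V1 E1 V2 E2 p w" "walk_of_length (box_edge V1 E1 V2 E2) n w q"
    using walk_Suc_first[OF Suc.prems] by blast
  obtain m1 m2 where m: "m1 + m2 = n" "walk_of_length E1 m1 (fst w) (fst q)" "walk_of_length E2 m2 (snd w) (snd q)"
    using Suc.IH[OF w(2)] by blast
  from w(1) show ?case unfolding box_edge_def
  proof (elim disjE conjE)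
    assume h: "fst p = fst w" "E2 (snd p) (snd w)"
    have "walk_of_length E2 (1 + m2) (snd p) (snd q)" by (rule walk_append[OF walk_edge[of E2, OF h(2)] m(3)])
    then show ?thesis using m h by (intro exI[of _ m1] exI[of _ "1 + m2"]) auto
  next
    assume h: "snd p = snd w" "E1 (fst p) (fst w)"
    have "walk_of_length E1 (1 + m1) (fst p) (fst q)" by (rule walk_append[OF walk_edge[of E1, OF h(2)] m(2)])
    then show ?thesis using m h by (intro exI[of _ "1 + m1"] exI[of _ m2]) auto
  qed
qed

lemma nd_box:
  assumes c1: "connected_graph V1 E1" and c2: "connected_graph V2 E2"
    and a: "a \<in> V1" "b \<in> V1" and v: "v \<in> V2" "w \<in> V2"
  shows "dist (box_edge V1 E1 V2 E2) (a, v) (b, w) = enat (nd E1 a b + nd E2 v w)"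
proof -
  obtain n1 where n1: "walk_of_length E1 n1 a b" using c1 a unfolding connected_graph_def by blast
  obtain n2 where n2: "walk_of_length E2 n2 v w" using c2 v unfolding connected_graph_def by blast
  have W: "walk_of_length (box_edge V1 E1 V2 E2) (nd E1 a b + nd E2 v w) (a, v) (b, w)"
    by (rule walk_append[OF lift1[OF walk_nd[OF n1] v(1)] lift2[OF walk_nd[OF n2] a(2)]])
  have le: "nd (box_edge V1 E1 V2 E2) (a, v) (b, w) \<le> nd E1 a b + nd E2 v w" by (rule nd_le[OF W])
  obtain m1 m2 where m: "m1 + m2 = nd (box_edge V1 E1 V2 E2) (a, v) (b, w)"
     "walk_of_length E1 m1 a b" "walk_of_length E2 m2 v w"
    using proj[OF walk_nd[OF W]] by auto
  have "nd E1 a b \<le> m1" "nd E2 v w \<le> m2" using nd_le[OF m(2)] nd_le[OF m(3)] by auto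
  then show ?thesis using dist_nd[OF W] le m(1) by simp
qed

lemma sum_step:
  fixes g h :: "'a \<Rightarrow> int"
  assumes "finite A" "a0 \<in> A" "\<forall>a\<in>A. g a \<le> h a + 1" "g a0 \<le> h a0"
  shows "(\<Sum>a\<in>A. g a) \<le> (\<Sum>a\<in>A. h a) + int (card A) - 1"
proof -
  have "(\<Sum>a\<in>A. g a) = g a0 + (\<Sum>a\<in>A-{a0}. g a)" using assms by (simp add: sum.remove)
  also have "(\<Sum>a\<in>A-{a0}. g a) \<le> (\<Sum>a\<in>A-{a0}. h a + 1)" using assms by (intro sum_mono) auto
  also have "(\<Sum>a\<in>A-{a0}. h a + 1) = (\<Sum>a\<in>A-{a0}. h a) + int (card A) - 1"
  proof -
    have "card A > 0" using assms by (auto simp: card_gt_0_iff)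
    then have "card A \<ge> 1" by simp
    then show ?thesis using assms by (simp add: sum.distrib card_Diff_singleton of_nat_diff)
  qed
  finally have "(\<Sum>a\<in>A. g a) \<le> h a0 + (\<Sum>a\<in>A-{a0}. h a) + int (card A) - 1" using assms by linarith
  also have "h a0 + (\<Sum>a\<in>A-{a0}. h a) = (\<Sum>a\<in>A. h a)" using assms by (simp add: sum.remove)
  finally show ?thesis .
qed


lemma key:
  assumes g: "graph V E" and inf: "infinite V" and conn: "connected_graph V E"
    and lf: "locally_finite V E" and A: "finite A" "A \<subseteq> V"
  shows "\<exists>x x'. x \<in> V \<and> x' \<in> V \<and> E x x' \<and> (\<forall>a\<in>A. nd E x' a = nd E x a + 1)"
proof -
  have sym: "\<And>x y. E x y \<Longrightarrow> E y x" using g unfolding graph_def by blast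
  have cw: "\<exists>n. walk_of_length E n x y" if "x \<in> V" "y \<in> V" for x y
    using conn that unfolding connected_graph_def by blast
  obtain r where r: "r \<in> V" using inf by (metis ex_in_conv finite.emptyI)
  have ball: "finite {v\<in>V. nd E r v \<le> k}" for k
  proof (induction k)
    case 0
    have "{v\<in>V. nd E r v \<le> 0} \<subseteq> {r}"
    proof
      fix v assume v: "v \<in> {v\<in>V. nd E r v \<le> 0}"
      then obtain n where "walk_of_length E n r v" using cw r by blast
      then have "walk_of_length E (nd E r v) r v" by (rule walk_nd)
      then show "v \<in> {r}" using v by (simp add: walk_0)
    qed
    then show ?case using finite_subset by blast
  next
    case (Suc k)
    let ?B = "{v\<in>V. nd E r v \<le> k}"
    have "{v\<in>V. nd E r v \<le> Suc k} \<subseteq> ?B \<union> (\<Union>w\<in>?B. {x. E w x})"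
    proof
      fix v assume v: "v \<in> {v\<in>V. nd E r v \<le> Suc k}"
      show "v \<in> ?B \<union> (\<Union>w\<in>?B. {x. E w x})"
      proof (cases "nd E r v \<le> k")
        case True then show ?thesis using v by auto
      next
        case False
        then have eq: "nd E r v = Suc k" using v by auto
        obtain n where wn: "walk_of_length E n r v" using cw r v by blast
        have ws: "walk_of_length E (Suc k) r v" using walk_nd[OF wn] eq by simp
        obtain w where w: "walk_of_length E k r w" "E w v" using walk_Suc_last[OF ws] by blast
        have "w \<in> V" by (rule walk_in_V[OF g w(1) r])
        moreover have "nd E r w \<le> k" by (rule nd_le[OF w(1)])
        ultimately show ?thesis using w(2) by blast
      qed
    qed
    moreover have "finite (?B \<union> (\<Union>w\<in>?B. {x. E w x}))"
      using Suc.IH lf unfolding locally_finite_def by auto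
    ultimately show ?case using finite_subset by blast
  qed
  define S where "S = (\<Sum>a\<in>A. nd E r a)"
  have "infinite (V - {v\<in>V. nd E r v \<le> 2 * S})" by (rule Diff_infinite_finite[OF ball inf])
  then have "V - {v\<in>V. nd E r v \<le> 2 * S} \<noteq> {}" using finite.emptyI by metis
  then obtain v where "v \<in> V - {v\<in>V. nd E r v \<le> 2 * S}" by blast
  then have v: "v \<in> V" "\<not> nd E r v \<le> 2 * S" by auto
  define L where "L = nd E r v"
  have LS: "L > 2 * S" using v L_def by simp
  obtain n0 where "walk_of_length E n0 r v" using cw r v by blast
  then have "walk_of_length E L r v" unfolding L_def by (rule walk_nd)
  then obtain f where f: "f 0 = r" "f L = v" "\<forall>i<L. E (f i) (f (Suc i))" unfolding walk_fun by blast
  have fw: "walk_of_length E i r (f i)" "walk_of_length E (L - i) (f i) v" if "i \<le> L" for i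
    using walk_split[OF f that] by auto
  have fV: "f i \<in> V" if "i \<le> L" for i using walk_in_V[OF g fw(1)[OF that] r] .
  have fd: "nd E r (f i) = i" if i: "i \<le> L" for i
  proof -
    have "nd E r (f i) \<le> i" by (rule nd_le[OF fw(1)[OF i]])
    moreover have "nd E (f i) v \<le> L - i" by (rule nd_le[OF fw(2)[OF i]])
    moreover have "L \<le> nd E r (f i) + nd E (f i) v" unfolding L_def by (rule nd_tri[OF fw(1)[OF i] fw(2)[OF i]])
    ultimately show ?thesis using i by linarith
  qed
  have ndA: "walk_of_length E (nd E x a) x a" if xa: "x \<in> V" "a \<in> A" for x a
  proof -
    obtain n where "walk_of_length E n x a" using cw[of x a] xa A by auto
    then show ?thesis by (rule walk_nd)
  qed
  show ?thesis
  proof (rule ccontr)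
    assume neg: "\<not> ?thesis"
    have bad: "\<exists>a\<in>A. nd E (f (Suc i)) a \<noteq> nd E (f i) a + 1" if iL: "i < L" for i
    proof (rule ccontr)
      assume "\<not> (\<exists>a\<in>A. nd E (f (Suc i)) a \<noteq> nd E (f i) a + 1)"
      then have all: "\<forall>a\<in>A. nd E (f (Suc i)) a = nd E (f i) a + 1" by blast
      have "\<exists>x x'. x \<in> V \<and> x' \<in> V \<and> E x x' \<and> (\<forall>a\<in>A. nd E x' a = nd E x a + 1)"
        by (intro exI[of _ "f i"] exI[of _ "f (Suc i)"] conjI all fV f(3)[rule_format]) (use iL in auto)
      then show False using neg by blast
    qed
    have step: "nd E (f (Suc i)) a \<le> nd E (f i) a + 1" if i: "i < L" and a: "a \<in> A" for i a
    proof -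
      have e: "walk_of_length E 1 (f (Suc i)) (f i)" by (rule walk_edge[of E, OF sym[OF f(3)[rule_format, OF i]]])
      have "nd E (f (Suc i)) a \<le> nd E (f (Suc i)) (f i) + nd E (f i) a"
        by (rule nd_tri[OF e ndA]) (use fV i a in auto)
      moreover have "nd E (f (Suc i)) (f i) \<le> 1" by (rule nd_le[OF e])
      ultimately show ?thesis by linarith
    qed
    have F: "(\<Sum>a\<in>A. int (nd E (f i) a)) \<le> int S + int i * (int (card A) - 1)" if "i \<le> L" for i
      using that
    proof (induction i)
      case 0
      then show ?case using f(1) unfolding S_def by simp
    next
      case (Suc i)
      then have i: "i < L" by simp
      obtain a0 where a0: "a0 \<in> A" "nd E (f (Suc i)) a0 \<noteq> nd E (f i) a0 + 1" using bad[OF i] by blast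
      have "(\<Sum>a\<in>A. int (nd E (f (Suc i)) a)) \<le> (\<Sum>a\<in>A. int (nd E (f i) a)) + int (card A) - 1"
      proof (rule sum_step[OF A(1) a0(1)])
        show "\<forall>a\<in>A. int (nd E (f (Suc i)) a) \<le> int (nd E (f i) a) + 1"
        proof
          fix a assume "a \<in> A"
          from step[OF i this] show "int (nd E (f (Suc i)) a) \<le> int (nd E (f i) a) + 1" by simp
        qed
        have "nd E (f (Suc i)) a0 \<le> nd E (f i) a0" using step[OF i a0(1)] a0(2) by simp
        then show "int (nd E (f (Suc i)) a0) \<le> int (nd E (f i) a0)" by simp
      qed
      then show ?case using Suc.IH i by (simp add: algebra_simps)
    qed
    have low: "int (nd E (f L) a) \<ge> int L - int (nd E r a)" if a: "a \<in> A" for a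
    proof -
      have aV: "a \<in> V" using a A by auto
      have fLV: "f L \<in> V" using fV by simp
      have w2: "walk_of_length E (nd E (f L) a) (f L) a" by (rule ndA[OF fLV a])
      have w3: "walk_of_length E (nd E (f L) a) a (f L)" by (rule walk_rev[of E, OF sym w2])
      have "nd E r (f L) \<le> nd E r a + nd E a (f L)"
        by (rule nd_tri[OF ndA[OF r a] w3])
      moreover have "nd E a (f L) = nd E (f L) a"
        using nd_sym[of E, OF sym w2] by simp
      moreover have "nd E r (f L) = L" using fd by simp
      ultimately show ?thesis by linarith
    qed
    have "(\<Sum>a\<in>A. int L - int (nd E r a)) \<le> (\<Sum>a\<in>A. int (nd E (f L) a))"
      by (rule sum_mono) (use low in auto)
    moreover have "(\<Sum>a\<in>A. int L - int (nd E r a)) = int L * int (card A) - int S"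
      unfolding S_def by (simp add: sum_subtractf)
    ultimately have "int L * int (card A) - int S \<le> int S + int L * (int (card A) - 1)"
      using F[of L] by simp
    then have "int L \<le> 2 * int S" by (simp add: algebra_simps)
    then show False using LS by linarith
  qed
qed


theorem corollary2:
  fixes V1 :: "'a set" and E1 :: "'a \<Rightarrow> 'a \<Rightarrow> bool"
    and V2 :: "'b set" and E2 :: "'b \<Rightarrow> 'b \<Rightarrow> bool"
  assumes "graph V1 E1" and "graph V2 E2"
    and "infinite V1" and "infinite V2"
    and "connected_graph V1 E1" and "connected_graph V2 E2"
    and "locally_finite V1 E1" and "locally_finite V2 E2"
  shows "metric_dim (V1 \<times> V2) (box_edge V1 E1 V2 E2) = \<infinity>"
proof -
  have "\<not> (\<exists>W. finite W \<and> resolving_set (V1 \<times> V2) (box_edge V1 E1 V2 E2) W)"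
  proof
    assume "\<exists>W. finite W \<and> resolving_set (V1 \<times> V2) (box_edge V1 E1 V2 E2) W"
    then obtain W where W: "finite W" "resolving_set (V1 \<times> V2) (box_edge V1 E1 V2 E2) W" by blast
    have WV: "W \<subseteq> V1 \<times> V2" using W(2) unfolding resolving_set_def by blast
    have fA: "finite (fst ` W)" "fst ` W \<subseteq> V1" using W(1) WV by auto
    have fB: "finite (snd ` W)" "snd ` W \<subseteq> V2" using W(1) WV by auto
    obtain x x' where x: "x \<in> V1" "x' \<in> V1" "E1 x x'" "\<forall>a\<in>fst ` W. nd E1 x' a = nd E1 x a + 1"
      using key[OF assms(1) assms(3) assms(5) assms(7) fA] by blast
    obtain y y' where y: "y \<in> V2" "y' \<in> V2" "E2 y y'" "\<forall>b\<in>snd ` W. nd E2 y' b = nd E2 y b + 1"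
      using key[OF assms(2) assms(4) assms(6) assms(8) fB] by blast
    have ne: "(x', y) \<noteq> (x, y')" using x(3) assms(1) unfolding graph_def by auto
    have uV: "(x', y) \<in> V1 \<times> V2" "(x, y') \<in> V1 \<times> V2" using x y by auto
    obtain p where p: "p \<in> W" "resolves (box_edge V1 E1 V2 E2) p (x', y) (x, y')"
      using W(2) uV ne unfolding resolving_set_def by blast
    obtain a b where ab: "p = (a, b)" by fastforce
    have a: "a \<in> V1" "a \<in> fst ` W" and b: "b \<in> V2" "b \<in> snd ` W"
      using p(1) WV ab by (auto simp: image_iff; force)+
    have "dist (box_edge V1 E1 V2 E2) (x', y) (a, b) = enat (nd E1 x' a + nd E2 y b)"
      by (rule nd_box[OF assms(5,6) x(2) a(1) y(1) b(1)])
    moreover have "dist (box_edge V1 E1 V2 E2) (x, y') (a, b) = enat (nd E1 x a + nd E2 y' b)"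
      by (rule nd_box[OF assms(5,6) x(1) a(1) y(2) b(1)])
    moreover have "nd E1 x' a + nd E2 y b = nd E1 x a + nd E2 y' b"
    proof -
      have "nd E1 x' a = nd E1 x a + 1" using x(4) a(2) by blast
      moreover have "nd E2 y' b = nd E2 y b + 1" using y(4) b(2) by blast
      ultimately show ?thesis by simp
    qed
    ultimately show False using p(2) ab unfolding resolves_def by simp
  qed
  then show ?thesis unfolding metric_dim_def by simp
qed

end
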